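(* For any subgroup $\mathcal M\le\mathcal P_n$, $\mathrm{rank}\,A^{(\mathcal M)}=\mathrm{rank}\,D^{(\mathcal M)}=|\mathcal C^{*(\mathcal M)}|$.
   Context: $\mathcal P_n$ is the $n$-qubit Pauli group without phases; $\langle A,B\rangle=0$ if $A,B$ commute and $1$ otherwise. $\Gamma$ is a finite collection of supports $\gamma\subseteq\{1,\dots,n\}$; $\mathcal E_\gamma$ is the set of non-identity Paulis supported in $\gamma$, and $\mathcal E_\Gamma$ the disjoint union of the $\mathcal E_\gamma$ (each $e$ labeled by its support $\gamma_e$). For $h\in\mathcal P_n$, $h_\gamma$ is its restriction to $\gamma$ (identity elsewhere). $A^{(\mathcal M)}$ is the $|\mathcal M|\times|\mathcal E_\Gamma|$ matrix with $A^{(\mathcal M)}[M,e]=1$ if $M_{\gamma_e}=e$ and $0$ otherwise; $D^{(\mathcal M)}$ is the $|\mathcal M|\times|\mathcal E_\Gamma|$ matrix with entries $\langle M,e\rangle$. $\mathcal C^{*(\mathcal M)}$ is the set of nontrivial syndrome classes, i.e. equivalence classes of $\mathcal E_\Gamma$ under equality of $(\langle e,M\rangle)_{M\in\mathcal M}$, excluding the class of all-zero syndrome. *)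

theory Defs
  imports Complex_Main "HOL-Algebra.Group" "HOL-Library.Function_Algebras"
begin

(* single-qubit Paulis without phase *)
datatype pauli = PI | PX | PY | PZ

fun pmul1 :: "pauli \<Rightarrow> pauli \<Rightarrow> pauli" where
  "pmul1 PI b = b"
| "pmul1 a PI = a"
| "pmul1 PX PX = PI" | "pmul1 PY PY = PI" | "pmul1 PZ PZ = PI"
| "pmul1 PX PY = PZ" | "pmul1 PY PX = PZ"
| "pmul1 PX PZ = PY" | "pmul1 PZ PX = PY"
| "pmul1 PY PZ = PX" | "pmul1 PZ PY = PX"

definition anticomm1 :: "pauli \<Rightarrow> pauli \<Rightarrow> bool" where
  "anticomm1 a b \<longleftrightarrow> a \<noteq> PI \<and> b \<noteq> PI \<and> a \<noteq> b"

definition paulis :: "nat \<Rightarrow> (nat \<Rightarrow> pauli) set" where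
  "paulis n = {p. \<forall>i. i \<notin> {1..n} \<longrightarrow> p i = PI}"

definition pid :: "nat \<Rightarrow> pauli" where
  "pid = (\<lambda>i. PI)"

definition pmul :: "(nat \<Rightarrow> pauli) \<Rightarrow> (nat \<Rightarrow> pauli) \<Rightarrow> (nat \<Rightarrow> pauli)" where
  "pmul p q = (\<lambda>i. pmul1 (p i) (q i))"

definition pauli_group :: "nat \<Rightarrow> (nat \<Rightarrow> pauli) monoid" where
  "pauli_group n = \<lparr>carrier = paulis n, mult = pmul, one = pid\<rparr>"

(* symplectic form <A,B>: 0 if A,B commute, 1 otherwise *)
definition symp :: "nat \<Rightarrow> (nat \<Rightarrow> pauli) \<Rightarrow> (nat \<Rightarrow> pauli) \<Rightarrow> nat" where
  "symp n p q = card {i \<in> {1..n}. anticomm1 (p i) (q i)} mod 2"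

definition prestrict :: "(nat \<Rightarrow> pauli) \<Rightarrow> nat set \<Rightarrow> (nat \<Rightarrow> pauli)" where
  "prestrict h \<gamma> = (\<lambda>i. if i \<in> \<gamma> then h i else PI)"

(* E_Gamma: disjoint union of E_gamma, elements labelled by their support gamma *)
definition errs :: "nat \<Rightarrow> nat set set \<Rightarrow> (nat set \<times> (nat \<Rightarrow> pauli)) set" where
  "errs n \<Gamma> = {(\<gamma>, e). \<gamma> \<in> \<Gamma> \<and> e \<in> paulis n \<and> e \<noteq> pid \<and> (\<forall>i. i \<notin> \<gamma> \<longrightarrow> e i = PI)}"

definition matA :: "(nat \<Rightarrow> pauli) \<Rightarrow> nat set \<times> (nat \<Rightarrow> pauli) \<Rightarrow> real" where
  "matA M ge = (if prestrict M (fst ge) = snd ge then 1 else 0)"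

definition matD :: "nat \<Rightarrow> (nat \<Rightarrow> pauli) \<Rightarrow> nat set \<times> (nat \<Rightarrow> pauli) \<Rightarrow> real" where
  "matD n M ge = real (symp n M (snd ge))"

definition syn_rel :: "nat \<Rightarrow> nat set set \<Rightarrow> (nat \<Rightarrow> pauli) set
    \<Rightarrow> ((nat set \<times> (nat \<Rightarrow> pauli)) \<times> (nat set \<times> (nat \<Rightarrow> pauli))) set" where
  "syn_rel n \<Gamma> \<M> = {(x, y). x \<in> errs n \<Gamma> \<and> y \<in> errs n \<Gamma> \<and>
      (\<forall>M\<in>\<M>. symp n (snd x) M = symp n (snd y) M)}"

definition nontriv_classes :: "nat \<Rightarrow> nat set set \<Rightarrow> (nat \<Rightarrow> pauli) set
    \<Rightarrow> (nat set \<times> (nat \<Rightarrow> pauli)) set set" where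
  "nontriv_classes n \<Gamma> \<M> = {c \<in> errs n \<Gamma> // syn_rel n \<Gamma> \<M>.
      \<not> (\<forall>x\<in>c. \<forall>M\<in>\<M>. symp n (snd x) M = 0)}"

definition real_rank :: "'r set \<Rightarrow> 'c set \<Rightarrow> ('r \<Rightarrow> 'c \<Rightarrow> real) \<Rightarrow> nat" where
  "real_rank R C f = vector_space.dim (\<lambda>(a::real) (v::'c \<Rightarrow> real) x. a * v x)
      ((\<lambda>r. \<lambda>c. if c \<in> C then f r c else 0) ` R)"

end

theory Submission
  imports Defs
begin


lemma fun_sum_apply: "(\<Sum>i\<in>A. f i) x = (\<Sum>i\<in>A. (f i x :: real))"
  by (induction A rule: infinite_finite_induct) auto

lemma UNIV_pauli: "(UNIV :: pauli set) = {PI, PX, PY, PZ}"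
  using pauli.exhaust by auto

lemma finite_pauli: "finite (UNIV :: pauli set)"
  by (simp add: UNIV_pauli)

lemma finite_paulis: "finite (paulis n)"
proof -
  have "paulis n \<subseteq> {f. \<forall>x. (x \<in> {1..n} \<longrightarrow> f x \<in> UNIV) \<and> (x \<notin> {1..n} \<longrightarrow> f x = PI)}"
    by (auto simp: paulis_def)
  moreover have "finite {f. \<forall>x. (x \<in> {1..n} \<longrightarrow> f x \<in> (UNIV::pauli set)) \<and> (x \<notin> {1..n} \<longrightarrow> f x = PI)}"
    by (rule finite_set_of_finite_funs) (auto simp: finite_pauli)
  ultimately show ?thesis using finite_subset by blast
qed

definition chi :: "nat \<Rightarrow> (nat \<Rightarrow> pauli) \<Rightarrow> (nat \<Rightarrow> pauli) \<Rightarrow> real" where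
  "chi n p q = (-1) ^ symp n p q"

lemma symp_01: "symp n p q = 0 \<or> symp n p q = 1"
  unfolding symp_def by auto

lemma chi_1: "chi n p q = 1 \<longleftrightarrow> symp n p q = 0"
  using symp_01[of n p q] by (auto simp: chi_def)

lemma chi_m1: "chi n p q = -1 \<longleftrightarrow> symp n p q = 1"
  using symp_01[of n p q] by (auto simp: chi_def)

lemma chi_cases: "chi n p q = 1 \<or> chi n p q = -1"
  using symp_01[of n p q] by (auto simp: chi_def)

lemma real_symp: "real (symp n p q) = (1 - chi n p q) / 2"
  using symp_01[of n p q] by (auto simp: chi_def)

lemma anticomm1_sym: "anticomm1 a b = anticomm1 b a"
  by (auto simp: anticomm1_def)

lemma symp_sym: "symp n p q = symp n q p"
  unfolding symp_def by (simp add: anticomm1_sym)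

lemma chi_sym: "chi n p q = chi n q p"
  by (simp add: chi_def symp_sym)

lemma m1_pow_mod2: "(-1::real) ^ (k mod 2) = (-1) ^ k"
  by (simp add: minus_one_power_iff)

lemma chi_prod: "chi n p q = (\<Prod>i\<in>{1..n}. if anticomm1 (p i) (q i) then -1 else 1)"
proof -
  have "(\<Prod>i\<in>{1..n}. if anticomm1 (p i) (q i) then -1 else (1::real))
      = (\<Prod>i\<in>{1..n} \<inter> {i. anticomm1 (p i) (q i)}. -1) * (\<Prod>i\<in>{1..n} \<inter> - {i. anticomm1 (p i) (q i)}. 1)"
    by (rule prod.If_cases) simp
  also have "\<dots> = (-1) ^ card {i \<in> {1..n}. anticomm1 (p i) (q i)}"
    by (simp add: Int_def conj_commute)
  finally show ?thesis unfolding chi_def symp_def m1_pow_mod2 by simp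
qed

lemma site_mult: "(if anticomm1 (pmul1 a b) c then -1 else (1::real))
   = (if anticomm1 a c then -1 else 1) * (if anticomm1 b c then -1 else 1)"
  by (cases a; cases b; cases c) (simp_all add: anticomm1_def)

lemma chi_mult: "chi n (pmul p q) x = chi n p x * chi n q x"
  unfolding chi_prod pmul_def by (simp add: site_mult prod.distrib)

lemma pmul1_inv: "pmul1 a (pmul1 a b) = b"
  by (cases a; cases b) simp_all

lemma pmul_inv: "pmul a (pmul a b) = b"
  by (simp add: pmul_def pmul1_inv)

lemma pmul1_PI: "pmul1 a b = PI \<longleftrightarrow> a = b"
  by (cases a; cases b) simp_all

lemma pmul_pid: "pmul a b = pid \<longleftrightarrow> a = b"
  by (auto simp: pmul_def pid_def fun_eq_iff pmul1_PI)

lemma symp_pid: "symp n pid q = 0"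
  by (simp add: symp_def pid_def anticomm1_def)

lemma symp_restrict:
  assumes "\<forall>i. i \<notin> \<gamma> \<longrightarrow> f i = PI"
  shows "symp n M f = symp n (prestrict M \<gamma>) f"
proof -
  have "{i \<in> {1..n}. anticomm1 (M i) (f i)} = {i \<in> {1..n}. anticomm1 (prestrict M \<gamma> i) (f i)}"
    using assms by (auto simp: prestrict_def anticomm1_def)
  thus ?thesis by (simp add: symp_def)
qed

lemma sum_chi_zero:
  assumes fin: "finite H" and cl: "\<forall>a\<in>H. \<forall>b\<in>H. pmul a b \<in> H"
    and M0: "M0 \<in> H" "chi n M0 x = -1"
  shows "(\<Sum>M\<in>H. chi n M x) = 0"
proof -
  have bij: "bij_betw (pmul M0) H H"
    by (rule bij_betw_byWitness[where f'="pmul M0"]) (use cl M0 in \<open>auto simp: pmul_inv\<close>)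
  have "(\<Sum>M\<in>H. chi n M x) = (\<Sum>M\<in>H. chi n (pmul M0 M) x)"
    using sum.reindex_bij_betw[OF bij, of "\<lambda>M. chi n M x"] by simp
  also have "\<dots> = - (\<Sum>M\<in>H. chi n M x)"
    by (simp add: chi_mult M0 sum_negf)
  finally show ?thesis by simp
qed

lemma sum_chi_one:
  assumes "\<forall>M\<in>H. chi n M x = 1"
  shows "(\<Sum>M\<in>H. chi n M x) = card H"
  using assms by simp

lemma sum_chi_zero2:
  assumes fin: "finite H" and cl: "\<forall>a\<in>H. \<forall>b\<in>H. pmul a b \<in> H"
    and M0: "M0 \<in> H" "chi n x M0 = -1"
  shows "(\<Sum>M\<in>H. chi n x M) = 0"
  using sum_chi_zero[OF fin cl M0(1), of n x] M0(2) by (simp add: chi_sym)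

lemma chi_sq: "chi n p q * chi n p q = 1"
  using chi_cases[of n p q] by auto

lemma chi_pid: "chi n pid q = 1"
  by (simp add: chi_1 symp_pid)

definition supp_in :: "nat \<Rightarrow> nat set \<Rightarrow> (nat \<Rightarrow> pauli) set" where
  "supp_in n \<gamma> = {f \<in> paulis n. \<forall>i. i \<notin> \<gamma> \<longrightarrow> f i = PI}"

lemma finite_supp_in: "finite (supp_in n \<gamma>)"
  using finite_paulis by (auto simp: supp_in_def)

lemma pid_supp_in: "pid \<in> supp_in n \<gamma>"
  by (auto simp: supp_in_def paulis_def pid_def)

lemma pmul_supp_in: "a \<in> supp_in n \<gamma> \<Longrightarrow> b \<in> supp_in n \<gamma> \<Longrightarrow> pmul a b \<in> supp_in n \<gamma>"
  by (auto simp: supp_in_def paulis_def pmul_def)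

lemma anti_exists:
  assumes x: "x \<in> supp_in n \<gamma>" "x \<noteq> pid"
  shows "\<exists>f\<in>supp_in n \<gamma>. chi n x f = -1"
proof -
  obtain i where i: "x i \<noteq> PI" using x(2) by (auto simp: pid_def fun_eq_iff)
  have iin: "i \<in> {1..n}" "i \<in> \<gamma>" using x(1) i by (auto simp: supp_in_def paulis_def)
  define f where "f = (\<lambda>j. if j = i then (if x i = PX then PZ else PX) else PI)"
  have fs: "f \<in> supp_in n \<gamma>" using iin by (auto simp: f_def supp_in_def paulis_def)
  have "{j \<in> {1..n}. anticomm1 (x j) (f j)} = {i}"
    using iin i by (auto simp: f_def anticomm1_def)
  hence "symp n x f = 1" by (simp add: symp_def)
  thus ?thesis using fs chi_m1 by blast
qed



lemma vs_fun: "vector_space (\<lambda>(a::real) (v::'c\<Rightarrow>real) x. a * v x)"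
  by unfold_locales (simp_all add: fun_eq_iff distrib_left distrib_right)

lemma dim_image_le_fun:
  fixes S :: "('c\<Rightarrow>real) set" and T :: "('c\<Rightarrow>real) \<Rightarrow> ('c\<Rightarrow>real)"
  assumes fin: "finite S"
    and add: "\<And>u v. T (u + v) = T u + T v"
    and sc: "\<And>a u. T (\<lambda>x. a * u x) = (\<lambda>x. a * T u x)"
  shows "vector_space.dim (\<lambda>(a::real) (v::'c\<Rightarrow>real) x. a * v x) (T ` S)
       \<le> vector_space.dim (\<lambda>(a::real) (v::'c\<Rightarrow>real) x. a * v x) S"
proof -
  interpret V: vector_space "\<lambda>(a::real) (v::'c\<Rightarrow>real) x. a * v x" by (rule vs_fun)
  interpret L: module_hom "\<lambda>(a::real) (v::'c\<Rightarrow>real) x. a * v x" "\<lambda>(a::real) (v::'c\<Rightarrow>real) x. a * v x" T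
    by unfold_locales (auto simp: add sc algebra_simps fun_eq_iff)
  obtain B where B: "B \<subseteq> S" "V.independent B" "S \<subseteq> V.span B" "card B = V.dim S"
    by (rule V.basis_exists)
  have fB: "finite B" using B(1) fin finite_subset by blast
  have "T ` S \<subseteq> V.span (T ` B)" using B(3) L.span_image by auto
  hence "V.dim (T ` S) \<le> card (T ` B)" using V.dim_le_card fB by blast
  also have "\<dots> \<le> card B" by (rule card_image_le[OF fB])
  finally show ?thesis using B(4) by simp
qed

theorem corollary1:
  fixes n :: nat and \<Gamma> :: "nat set set" and \<M> :: "(nat \<Rightarrow> pauli) set"
  assumes "finite \<Gamma>"
    and "\<forall>\<gamma>\<in>\<Gamma>. \<gamma> \<subseteq> {1..n}"
    and "subgroup \<M> (pauli_group n)"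
  shows "real_rank \<M> (errs n \<Gamma>) matA = card (nontriv_classes n \<Gamma> \<M>)
    \<and> real_rank \<M> (errs n \<Gamma>) (matD n) = card (nontriv_classes n \<Gamma> \<M>)"
proof -
  interpret V: vector_space "\<lambda>(a::real) (v::(nat set \<times> (nat\<Rightarrow>pauli))\<Rightarrow>real) x. a * v x"
    by (rule vs_fun)
  define E where "E = errs n \<Gamma>"
  define rA where "rA = (\<lambda>M. \<lambda>c. if c \<in> E then matA M c else 0)"
  define rD where "rD = (\<lambda>M. \<lambda>c. if c \<in> E then matD n M c else 0)"
  have MA: "real_rank \<M> (errs n \<Gamma>) matA = V.dim (rA ` \<M>)"
    unfolding real_rank_def rA_def E_def by simp
  have MD: "real_rank \<M> (errs n \<Gamma>) (matD n) = V.dim (rD ` \<M>)"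
    unfolding real_rank_def rD_def E_def by simp
  have Msub: "\<M> \<subseteq> paulis n"
    using subgroup.subset[OF assms(3)] by (simp add: pauli_group_def)
  have Mcl: "\<forall>a\<in>\<M>. \<forall>b\<in>\<M>. pmul a b \<in> \<M>"
    using subgroup.m_closed[OF assms(3)] by (simp add: pauli_group_def)
  have Mone: "pid \<in> \<M>"
    using subgroup.one_closed[OF assms(3)] by (simp add: pauli_group_def)
  have finM: "finite \<M>" using Msub finite_paulis finite_subset by blast
  have Ein: "\<And>g e. (g,e) \<in> E \<longleftrightarrow> g \<in> \<Gamma> \<and> e \<in> supp_in n g \<and> e \<noteq> pid"
    by (auto simp: E_def errs_def supp_in_def)
  have finE: "finite E"
  proof -
    have "E \<subseteq> \<Gamma> \<times> paulis n" by (auto simp: E_def errs_def)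
    thus ?thesis using assms(1) finite_paulis finite_subset by blast
  qed
  have prest: "prestrict M g \<in> supp_in n g" if "M \<in> \<M>" for M g
    using that Msub by (auto simp: supp_in_def prestrict_def paulis_def)
  have Ncard: "card (supp_in n g) > 0" for g
    using pid_supp_in finite_supp_in card_gt_0_iff by blast

  define T where "T = (\<lambda>v::(nat set \<times> (nat\<Rightarrow>pauli))\<Rightarrow>real. \<lambda>c. if c \<in> E then
      (\<Sum>h\<in>supp_in n (fst c). v (fst c, h) * real (symp n h (snd c))) else 0)"
  define T' where "T' = (\<lambda>v::(nat set \<times> (nat\<Rightarrow>pauli))\<Rightarrow>real. \<lambda>c. if c \<in> E then
      (- 2 / real (card (supp_in n (fst c)))) * (\<Sum>f\<in>supp_in n (fst c). v (fst c, f) * chi n f (snd c)) else 0)"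
  have TA: "T (rA M) = rD M" if M: "M \<in> \<M>" for M
  proof
    fix c :: "nat set \<times> (nat\<Rightarrow>pauli)"
    obtain g e where c: "c = (g, e)" by force
    show "T (rA M) c = rD M c"
    proof (cases "c \<in> E")
      case False thus ?thesis by (simp add: T_def rD_def)
    next
      case True
      hence ge: "g \<in> \<Gamma>" "e \<in> supp_in n g" "e \<noteq> pid" using Ein c by auto
      define m where "m = prestrict M g"
      have m: "m \<in> supp_in n g" using prest[OF M] m_def by simp
      have "\<forall>h\<in>supp_in n g. rA M (g, h) * real (symp n h e)
              = (if h = m then real (symp n m e) else 0)"
        using ge m by (auto simp: rA_def matA_def Ein m_def symp_pid)
      hence "(\<Sum>h\<in>supp_in n g. rA M (g, h) * real (symp n h e)) = real (symp n m e)"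
        using m by (simp add: sum.delta finite_supp_in)
      moreover have "symp n M e = symp n m e"
        using ge(2) symp_restrict[of g e n M] by (simp add: supp_in_def m_def)
      ultimately show ?thesis using True c
        by (simp add: T_def rD_def matD_def symp_sym)
    qed
  qed
  have TD: "T' (rD M) = rA M" if M: "M \<in> \<M>" for M
  proof
    fix c :: "nat set \<times> (nat\<Rightarrow>pauli)"
    obtain g e where c: "c = (g, e)" by force
    show "T' (rD M) c = rA M c"
    proof (cases "c \<in> E")
      case False thus ?thesis by (simp add: T'_def rA_def)
    next
      case True
      hence ge: "g \<in> \<Gamma>" "e \<in> supp_in n g" "e \<noteq> pid" using Ein c by auto
      define m where "m = prestrict M g"
      define S where "S = supp_in n g"
      define N where "N = real (card S)"
      have N: "N > 0" using Ncard N_def S_def by simp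
      have m: "m \<in> S" using prest[OF M] m_def S_def by simp
      have hterm: "rD M (g, f) * chi n f e
          = (1 / 2) * (chi n e f - chi n (pmul m e) f)" if f: "f \<in> S" for f
      proof -
        have r: "rD M (g, f) = real (symp n M f)"
          using f ge by (auto simp: rD_def matD_def Ein S_def symp_sym[of n M pid] symp_pid)
        have "symp n M f = symp n m f"
          using f symp_restrict[of g f n M] by (simp add: supp_in_def m_def S_def)
        hence rr: "rD M (g, f) = (1 - chi n m f) / 2" using r by (simp add: real_symp)
        have ce: "chi n f e = chi n e f" by (rule chi_sym)
        show ?thesis unfolding rr chi_mult ce by (simp add: field_simps)
      qed
      have s1: "(\<Sum>f\<in>S. chi n e f) = 0"
        using anti_exists[OF ge(2,3)] sum_chi_zero2[OF finite_supp_in] pmul_supp_in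
        unfolding S_def by blast
      have s2: "(\<Sum>f\<in>S. chi n (pmul m e) f) = (if m = e then N else 0)"
      proof (cases "m = e")
        case True hence "pmul m e = pid" by (simp add: pmul_pid)
        thus ?thesis using True by (simp add: chi_pid N_def)
      next
        case False
        have "pmul m e \<in> S" "pmul m e \<noteq> pid" using pmul_supp_in m ge False pmul_pid S_def by auto
        thus ?thesis using False anti_exists sum_chi_zero2[OF finite_supp_in] pmul_supp_in
          unfolding S_def by metis
      qed
      have sc: "(\<Sum>f\<in>S. rD M (g, f) * chi n f e)
          = (\<Sum>f\<in>S. (1 / 2) * (chi n e f - chi n (pmul m e) f))"
        by (rule sum.cong[OF refl]) (rule hterm)
      have "(- 2 / N) * (\<Sum>f\<in>S. rD M (g, f) * chi n f e)
          = (- 2 / N) * (\<Sum>f\<in>S. (1 / 2) * (chi n e f - chi n (pmul m e) f))"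
        unfolding sc ..
      also have "\<dots> = (- 2 / N) * ((1 / 2) * ((\<Sum>f\<in>S. chi n e f) - (\<Sum>f\<in>S. chi n (pmul m e) f)))"
        by (simp only: sum_subtractf[symmetric] sum_distrib_left)
      also have "\<dots> = (if m = e then 1 else 0)" using s1 s2 N by simp
      finally show ?thesis using True c
        by (simp add: T'_def rA_def matA_def m_def S_def N_def)
    qed
  qed
  have Tadd: "T (u + v) = T u + T v" for u v
    by (auto simp: T_def fun_eq_iff sum.distrib distrib_right)
  have Tsc: "T (\<lambda>x. a * u x) = (\<lambda>x. a * T u x)" for a u
    by (auto simp: T_def fun_eq_iff sum_distrib_left mult.assoc)
  have T'add: "T' (u + v) = T' u + T' v" for u v
    by (auto simp: T'_def fun_eq_iff sum.distrib distrib_right distrib_left)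
  have T'sc: "T' (\<lambda>x. a * u x) = (\<lambda>x. a * T' u x)" for a u
    by (auto simp: T'_def fun_eq_iff sum_distrib_left mult.assoc mult.left_commute)
  have imA: "T ` (rA ` \<M>) = rD ` \<M>" using TA by (simp add: image_image)
  have imD: "T' ` (rD ` \<M>) = rA ` \<M>" using TD by (simp add: image_image)
  have le1: "V.dim (rD ` \<M>) \<le> V.dim (rA ` \<M>)"
    using dim_image_le_fun[of "rA ` \<M>" T, OF _ Tadd Tsc] finM imA by simp
  have le2: "V.dim (rA ` \<M>) \<le> V.dim (rD ` \<M>)"
    using dim_image_le_fun[of "rD ` \<M>" T', OF _ T'add T'sc] finM imD by simp
  have eqAD: "V.dim (rA ` \<M>) = V.dim (rD ` \<M>)" using le1 le2 by simp

  define cl where "cl = (\<lambda>x::nat set \<times> (nat\<Rightarrow>pauli). {y\<in>E. \<forall>M\<in>\<M>. symp n (snd y) M = symp n (snd x) M})"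
  define NT where "NT = {x\<in>E. \<exists>M\<in>\<M>. symp n (snd x) M \<noteq> 0}"
  define C where "C = nontriv_classes n \<Gamma> \<M>"
  have clE: "cl x \<subseteq> E" for x by (auto simp: cl_def)
  have self: "x \<in> E \<Longrightarrow> x \<in> cl x" for x by (simp add: cl_def)
  have cleq: "y \<in> cl x \<Longrightarrow> cl y = cl x" for x y by (auto simp: cl_def)
  have img: "x \<in> E \<Longrightarrow> syn_rel n \<Gamma> \<M> `` {x} = cl x" for x
    by (auto simp: syn_rel_def cl_def E_def)
  have quot: "E // syn_rel n \<Gamma> \<M> = cl ` E"
  proof -
    have "E // syn_rel n \<Gamma> \<M> = (\<Union>x\<in>E. {cl x})"
      unfolding quotient_def by (rule SUP_cong[OF refl]) (simp add: img)
    thus ?thesis by auto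
  qed
  have Cdef: "C = cl ` NT"
  proof
    show "C \<subseteq> cl ` NT"
    proof
      fix c assume "c \<in> C"
      then obtain x where x: "x \<in> E" "c = cl x"
        and nz: "\<not> (\<forall>y\<in>c. \<forall>M\<in>\<M>. symp n (snd y) M = 0)"
        unfolding C_def nontriv_classes_def E_def[symmetric] quot by auto
      then obtain y M where y: "y \<in> c" "M \<in> \<M>" "symp n (snd y) M \<noteq> 0" by auto
      have "y \<in> E" using clE[of x] y(1) x(2) by blast
      hence "y \<in> NT" using y by (auto simp: NT_def)
      moreover have "c = cl y" using cleq[of y x] y(1) x(2) by simp
      ultimately show "c \<in> cl ` NT" by blast
    qed
  next
    show "cl ` NT \<subseteq> C"
    proof
      fix c assume "c \<in> cl ` NT"
      then obtain x where x: "x \<in> NT" "c = cl x" by auto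
      have xE: "x \<in> E" using x by (simp add: NT_def)
      hence "x \<in> c" using x self by auto
      thus "c \<in> C" unfolding C_def nontriv_classes_def E_def[symmetric] quot
        using x xE by (auto simp: NT_def)
    qed
  qed
  have finC: "finite C"
  proof -
    have "C \<subseteq> Pow E" using Cdef clE by auto
    thus ?thesis using finE finite_subset by blast
  qed
  have memC: "z \<in> c \<longleftrightarrow> c = cl z" if cC: "c \<in> C" and zE: "z \<in> E" for c z
  proof -
    obtain x where cx: "c = cl x" using cC Cdef by blast
    show ?thesis
    proof
      assume "z \<in> c" thus "c = cl z" using cleq[of z x] cx by simp
    next
      assume "c = cl z" thus "z \<in> c" using self[OF zE] by simp
    qed
  qed
  define ind where "ind = (\<lambda>(c::(nat set \<times> (nat\<Rightarrow>pauli)) set) z. if z \<in> c then 1 else (0::real))"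
  define B where "B = ind ` C"
  have injind: "inj_on ind C"
  proof
    fix c c' assume "ind c = ind c'"
    hence h: "\<And>z. ind c z = ind c' z" by simp
    show "c = c'"
    proof
      show "c \<subseteq> c'" using h by (force simp: ind_def split: if_splits)
      show "c' \<subseteq> c" using h by (force simp: ind_def split: if_splits)
    qed
  qed
  have cardB: "card B = card C" unfolding B_def by (rule card_image[OF injind])
  have indep: "V.independent B"
  proof
    assume "V.dependent B"
    then obtain t u v0 where t: "finite t" "t \<subseteq> B" "(\<Sum>v\<in>t. (\<lambda>x. u v * v x)) = 0"
      "v0 \<in> t" "u v0 \<noteq> 0"
      unfolding V.dependent_explicit by auto
    obtain c0 where c0: "c0 \<in> C" "v0 = ind c0" using t B_def by auto
    obtain x0 where x0: "x0 \<in> NT" "c0 = cl x0" using c0 Cdef by auto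
    have x0E: "x0 \<in> E" using x0 by (simp add: NT_def)
    have "(\<Sum>v\<in>t. (\<lambda>x. u v * v x)) x0 = 0" using t(3) by simp
    hence s: "(\<Sum>v\<in>t. u v * v x0) = 0" by (simp add: fun_sum_apply)
    have "u v * v x0 = (if v = v0 then u v0 else 0)" if v: "v \<in> t" for v
    proof -
      obtain c where c: "c \<in> C" "v = ind c" using v t B_def by auto
      show ?thesis
      proof (cases "v = v0")
        case True thus ?thesis using c0 x0 self[OF x0E] by (simp add: ind_def)
      next
        case False
        have "x0 \<notin> c"
        proof
          assume "x0 \<in> c"
          hence "c = cl x0" using memC[OF c(1) x0E] by simp
          thus False using False c c0 x0 by simp
        qed
        thus ?thesis using False c by (simp add: ind_def)
      qed
    qed
    hence "(\<Sum>v\<in>t. u v * v x0) = (\<Sum>v\<in>t. if v = v0 then u v0 else 0)"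
      by (intro sum.cong) auto
    also have "\<dots> = u v0" using t(1,4) by (simp add: sum.delta)
    finally show False using s t(5) by simp
  qed
  have RDinB: "rD ` \<M> \<subseteq> V.span B"
  proof
    fix r assume "r \<in> rD ` \<M>"
    then obtain M where M: "M \<in> \<M>" "r = rD M" by auto
    define SM where "SM = {c\<in>C. \<forall>y\<in>c. symp n (snd y) M = 1}"
    have finSM: "finite SM" using finC by (simp add: SM_def)
    have eq: "rD M = (\<Sum>c\<in>SM. ind c)"
    proof
      fix z
      show "rD M z = (\<Sum>c\<in>SM. ind c) z"
      proof (cases "z \<in> E")
        case False
        have "\<forall>c\<in>SM. ind c z = 0" using False clE Cdef by (auto simp: ind_def SM_def)
        thus ?thesis using False by (simp add: rD_def fun_sum_apply)
      next
        case True
        have eq: "\<forall>c\<in>SM. ind c z = (if c = cl z then 1 else 0)"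
        proof
          fix c assume "c \<in> SM"
          hence "c \<in> C" by (simp add: SM_def)
          hence "z \<in> c \<longleftrightarrow> c = cl z" using memC True by blast
          thus "ind c z = (if c = cl z then 1 else 0)" by (simp add: ind_def)
        qed
        have "(\<Sum>c\<in>SM. ind c) z = (\<Sum>c\<in>SM. if c = cl z then 1 else 0)"
          unfolding fun_sum_apply by (intro sum.cong) (auto simp: eq)
        also have "\<dots> = (if cl z \<in> SM then 1 else 0)" using finSM by (simp add: sum.delta)
        finally have s: "(\<Sum>c\<in>SM. ind c) z = (if cl z \<in> SM then 1 else 0)" .
        have iff: "cl z \<in> SM \<longleftrightarrow> symp n (snd z) M = 1"
        proof
          assume "cl z \<in> SM" thus "symp n (snd z) M = 1" using self[OF True] by (auto simp: SM_def)
        next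
          assume h: "symp n (snd z) M = 1"
          have "z \<in> NT" using h M(1) True unfolding NT_def by (intro CollectI conjI bexI[of _ M]) auto
          hence "cl z \<in> C" using Cdef by auto
          thus "cl z \<in> SM" using h M(1) by (auto simp: SM_def cl_def)
        qed
        have "rD M z = real (symp n (snd z) M)"
          using True by (simp add: rD_def matD_def symp_sym)
        thus ?thesis using s iff symp_01[of n "snd z" M] by auto
      qed
    qed
    show "r \<in> V.span B" unfolding M(2) eq
      by (rule V.span_sum) (auto intro: V.span_base simp: SM_def B_def)
  qed
  have BinRD: "B \<subseteq> V.span (rD ` \<M>)"
  proof
    fix b assume "b \<in> B"
    then obtain c where c: "c \<in> C" "b = ind c" by (auto simp: B_def)
    obtain x where x: "x \<in> NT" "c = cl x" using Cdef c by auto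
    have xE: "x \<in> E" and nz: "\<exists>M\<in>\<M>. symp n (snd x) M \<noteq> 0" using x by (auto simp: NT_def)
    define K where "K = real (card \<M>)"
    have K: "K > 0" using Mone finM by (auto simp: K_def card_gt_0_iff)
    have s1: "(\<Sum>M\<in>\<M>. chi n (snd x) M) = 0"
    proof -
      obtain M0 where M0: "M0 \<in> \<M>" "symp n (snd x) M0 \<noteq> 0" using nz by auto
      hence "chi n (snd x) M0 = -1" using symp_01[of n "snd x" M0] chi_m1 by auto
      thus ?thesis using sum_chi_zero2[OF finM Mcl M0(1)] by simp
    qed
    have eq: "ind c = (\<Sum>M\<in>\<M>. (\<lambda>z. (- 2 / K * chi n (snd x) M) * rD M z))"
    proof
      fix z
      show "ind c z = (\<Sum>M\<in>\<M>. (\<lambda>z. (- 2 / K * chi n (snd x) M) * rD M z)) z"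
      proof (cases "z \<in> E")
        case False
        have "z \<notin> c" using clE[of x] x(2) False by blast
        thus ?thesis using False by (simp add: ind_def rD_def fun_sum_apply)
      next
        case True
        have t: "(- 2 / K * chi n (snd x) M) * rD M z
            = (- 1 / K) * (chi n (snd x) M - chi n (pmul (snd x) (snd z)) M)" for M
        proof -
          have rr: "rD M z = (1 - chi n (snd z) M) / 2"
            using True by (simp add: rD_def matD_def real_symp chi_sym)
          show ?thesis unfolding rr chi_mult using K by (simp add: field_simps)
        qed
        have s2: "(\<Sum>M\<in>\<M>. chi n (pmul (snd x) (snd z)) M) = (if z \<in> c then K else 0)"
        proof (cases "z \<in> c")
          case True
          hence eqs: "\<forall>M\<in>\<M>. symp n (snd z) M = symp n (snd x) M" using x by (simp add: cl_def)
          have "\<forall>M\<in>\<M>. chi n (pmul (snd x) (snd z)) M = 1"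
          proof
            fix M assume "M \<in> \<M>"
            hence "chi n (snd z) M = chi n (snd x) M" using eqs by (simp add: chi_def)
            thus "chi n (pmul (snd x) (snd z)) M = 1" by (simp add: chi_mult chi_sq)
          qed
          thus ?thesis using True by (simp add: K_def)
        next
          case False
          then obtain M0 where M0: "M0 \<in> \<M>" "symp n (snd z) M0 \<noteq> symp n (snd x) M0"
            using \<open>z \<in> E\<close> x by (auto simp: cl_def)
          hence "chi n (pmul (snd x) (snd z)) M0 = -1"
            unfolding chi_mult using symp_01[of n "snd z" M0] symp_01[of n "snd x" M0]
            by (auto simp: chi_def)
          thus ?thesis using False sum_chi_zero2[OF finM Mcl M0(1)] by simp
        qed
        have "(\<Sum>M\<in>\<M>. (\<lambda>z. (- 2 / K * chi n (snd x) M) * rD M z)) z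
            = (\<Sum>M\<in>\<M>. (- 1 / K) * (chi n (snd x) M - chi n (pmul (snd x) (snd z)) M))"
          unfolding fun_sum_apply t ..
        also have "\<dots> = (- 1 / K) * ((\<Sum>M\<in>\<M>. chi n (snd x) M) - (\<Sum>M\<in>\<M>. chi n (pmul (snd x) (snd z)) M))"
          by (simp only: sum_subtractf[symmetric] sum_distrib_left)
        also have "\<dots> = (if z \<in> c then 1 else 0)" using s1 s2 K by simp
        finally show ?thesis by (simp add: ind_def)
      qed
    qed
    show "b \<in> V.span (rD ` \<M>)" unfolding c(2) eq
    proof (rule V.span_sum)
      fix M assume "M \<in> \<M>"
      hence "rD M \<in> V.span (rD ` \<M>)" by (intro V.span_base) auto
      from V.span_scale[OF this, of "- 2 / K * chi n (snd x) M"]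
      show "(\<lambda>z. (- 2 / K * chi n (snd x) M) * rD M z) \<in> V.span (rD ` \<M>)" by simp
    qed
  qed
  have spanEq: "V.span (rD ` \<M>) = V.span B"
    using V.span_minimal[OF RDinB V.subspace_span] V.span_minimal[OF BinRD V.subspace_span] by blast
  have "V.dim (rD ` \<M>) = V.dim B" by (rule V.span_eq_dim[OF spanEq])
  also have "\<dots> = card B" by (rule V.dim_eq_card_independent[OF indep])
  finally have "V.dim (rD ` \<M>) = card C" using cardB by simp
  thus ?thesis using MA MD eqAD C_def by simp
qed

end
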